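(* (i) There exists a zero-dimensional locally compact metrizable abelian group in which every element $x$ satisfies $2x=0$ and which is not $g$-reversible. (ii) There exists a locally connected locally compact metrizable abelian group which is not $g$-reversible.
   Context: All topological groups are assumed Hausdorff. A topological group $G$ is called $g$-reversible if every continuous automorphism of $G$ (i.e. every continuous group isomorphism of $G$ onto itself) is an open map. *)

theory Defs
  imports "HOL-Analysis.Analysis" "HOL-Algebra.Group"
begin

definition topological_group :: "('a, 'b) monoid_scheme \<Rightarrow> 'a topology \<Rightarrow> bool" where
  "topological_group G X \<longleftrightarrow>
     group G \<and> topspace X = carrier G \<and> Hausdorff_space X \<and>
     continuous_map (prod_topology X X) X (\<lambda>(x, y). x \<otimes>\<^bsub>G\<^esub> y) \<and>
     continuous_map X X (\<lambda>x. inv\<^bsub>G\<^esub> x)"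

definition continuous_automorphism :: "('a, 'b) monoid_scheme \<Rightarrow> 'a topology \<Rightarrow> ('a \<Rightarrow> 'a) \<Rightarrow> bool" where
  "continuous_automorphism G X f \<longleftrightarrow> f \<in> iso G G \<and> continuous_map X X f"

definition g_reversible :: "('a, 'b) monoid_scheme \<Rightarrow> 'a topology \<Rightarrow> bool" where
  "g_reversible G X \<longleftrightarrow> (\<forall>f. continuous_automorphism G X f \<longrightarrow> open_map X X f)"

end

theory Submission
  imports Defs "HOL-Algebra.Product_Groups"
begin


definition tgrp :: "('a, 'c) monoid_scheme \<Rightarrow> ('a \<Rightarrow> 'b) \<Rightarrow> 'b monoid" where
 "tgrp G e = \<lparr>carrier = e ` carrier G,
     mult = (\<lambda>x y. e (inv_into (carrier G) e x \<otimes>\<^bsub>G\<^esub> inv_into (carrier G) e y)),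
     one = e \<one>\<^bsub>G\<^esub>\<rparr>"

definition ttop :: "'a set \<Rightarrow> 'a topology \<Rightarrow> ('a \<Rightarrow> 'b) \<Rightarrow> 'b topology" where
 "ttop C X e = pullback_topology (e ` C) (inv_into C e) X"

context
  fixes G :: "('a, 'c) monoid_scheme" and X :: "'a topology" and e :: "'a \<Rightarrow> 'b"
  assumes tg: "topological_group G X" and inj: "inj_on e (carrier G)"
begin

private abbreviation "r \<equiv> inv_into (carrier G) e"

private lemma grp_0: "group G" using tg by (simp add: topological_group_def)
private lemma tsp_0: "topspace X = carrier G" using tg by (simp add: topological_group_def)

private lemma re: "x \<in> carrier G \<Longrightarrow> r (e x) = x" using inj by (simp add: inv_into_f_f)
private lemma er: "y \<in> e ` carrier G \<Longrightarrow> e (r y) = y" by (simp add: f_inv_into_f)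
private lemma rC: "y \<in> e ` carrier G \<Longrightarrow> r y \<in> carrier G" by (simp add: inv_into_into)

lemma ttop_topspace: "topspace (ttop (carrier G) X e) = e ` carrier G"
  unfolding ttop_def topspace_pullback_topology tsp_0 using rC by auto

lemma ttop_maps: "homeomorphic_maps X (ttop (carrier G) X e) e r"
  unfolding homeomorphic_maps_def
proof (intro conjI ballI)
  show "continuous_map X (ttop (carrier G) X e) e"
    unfolding ttop_def
  proof (rule continuous_map_pullback')
    show "continuous_map X X (r \<circ> e)"
      by (rule continuous_map_eq[OF continuous_map_id]) (simp add: tsp_0 re)
    show "topspace X \<subseteq> e -` e ` carrier G" using tsp_0 by auto
  qed
  show "continuous_map (ttop (carrier G) X e) X r"
    using continuous_map_pullback[OF continuous_map_id, of "e ` carrier G" r]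
    by (simp add: ttop_def)
  show "\<And>x. x \<in> topspace X \<Longrightarrow> r (e x) = x" by (simp add: tsp_0 re)
  show "\<And>y. y \<in> topspace (ttop (carrier G) X e) \<Longrightarrow> e (r y) = y"
    by (simp add: ttop_topspace er)
qed

lemma ttop_homeo: "X homeomorphic_space ttop (carrier G) X e"
  using ttop_maps homeomorphic_space_def by blast

private lemma mult': "x \<in> carrier G \<Longrightarrow> y \<in> carrier G \<Longrightarrow> e x \<otimes>\<^bsub>tgrp G e\<^esub> e y = e (x \<otimes>\<^bsub>G\<^esub> y)"
  by (simp add: tgrp_def re)

lemma tgrp_monoid: "monoid (tgrp G e)"
proof (rule monoidI)
  fix x y z assume x: "x \<in> carrier (tgrp G e)" and y: "y \<in> carrier (tgrp G e)" and z: "z \<in> carrier (tgrp G e)"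
  then have xx: "x \<in> e ` carrier G" and yy: "y \<in> e ` carrier G" and zz: "z \<in> e ` carrier G" by (auto simp: tgrp_def)
  show "x \<otimes>\<^bsub>tgrp G e\<^esub> y \<in> carrier (tgrp G e)"
    using xx yy rC grp_0 by (auto simp: tgrp_def intro: group.subgroupE(4)[OF _ group.subgroup_self] monoid.m_closed group.is_monoid)
  show "x \<otimes>\<^bsub>tgrp G e\<^esub> y \<otimes>\<^bsub>tgrp G e\<^esub> z = x \<otimes>\<^bsub>tgrp G e\<^esub> (y \<otimes>\<^bsub>tgrp G e\<^esub> z)"
    using xx yy zz rC grp_0 by (simp add: tgrp_def re group.is_monoid monoid.m_closed monoid.m_assoc)
next
  show "\<one>\<^bsub>tgrp G e\<^esub> \<in> carrier (tgrp G e)" using grp_0 by (simp add: tgrp_def group.is_monoid monoid.one_closed)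
next
  fix x assume x: "x \<in> carrier (tgrp G e)"
  then have xx: "x \<in> e ` carrier G" by (auto simp: tgrp_def)
  show "\<one>\<^bsub>tgrp G e\<^esub> \<otimes>\<^bsub>tgrp G e\<^esub> x = x" "x \<otimes>\<^bsub>tgrp G e\<^esub> \<one>\<^bsub>tgrp G e\<^esub> = x"
    using xx rC grp_0 er by (simp_all add: tgrp_def re group.is_monoid monoid.one_closed monoid.l_one monoid.r_one)
qed

lemma tgrp_iso: "e \<in> iso G (tgrp G e)"
  unfolding iso_def hom_def bij_betw_def
  using inj grp_0 by (auto simp: tgrp_def re group.is_monoid monoid.m_closed)

lemma tgrp_group: "group (tgrp G e)"
  using group.iso_imp_group[OF grp_0 _ tgrp_monoid] tgrp_iso unfolding is_iso_def by blast

lemma tgrp_r_iso: "r \<in> iso (tgrp G e) G"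
  using group.iso_set_sym[OF grp_0 tgrp_iso] .

private lemma inv': "y \<in> e ` carrier G \<Longrightarrow> inv\<^bsub>tgrp G e\<^esub> y = e (inv\<^bsub>G\<^esub> (r y))"
proof -
  assume y: "y \<in> e ` carrier G"
  have ry: "r y \<in> carrier G" using rC y .
  have "inv\<^bsub>tgrp G e\<^esub> (e (r y)) = e (inv\<^bsub>G\<^esub> (r y))"
  proof (rule group.inv_equality[OF tgrp_group])
    show "e (inv\<^bsub>G\<^esub> r y) \<otimes>\<^bsub>tgrp G e\<^esub> e (r y) = \<one>\<^bsub>tgrp G e\<^esub>"
      using ry grp_0 by (simp add: mult' group.l_inv group.inv_closed) (simp add: tgrp_def)
    show "e (r y) \<in> carrier (tgrp G e)" using ry by (simp add: tgrp_def)
    show "e (inv\<^bsub>G\<^esub> r y) \<in> carrier (tgrp G e)" using ry grp_0 by (simp add: tgrp_def group.inv_closed)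
  qed
  then show ?thesis using er[OF y] by simp
qed

lemma tgrp_topological_group: "topological_group (tgrp G e) (ttop (carrier G) X e)"
proof -
  let ?X = "ttop (carrier G) X e"
  have ce: "continuous_map X ?X e" and cr: "continuous_map ?X X r"
    using ttop_maps by (auto simp: homeomorphic_maps_def)
  have cm: "continuous_map (prod_topology X X) X (\<lambda>(x, y). x \<otimes>\<^bsub>G\<^esub> y)"
   and ci: "continuous_map X X (\<lambda>x. inv\<^bsub>G\<^esub> x)" and hd: "Hausdorff_space X"
    using tg by (auto simp: topological_group_def)
  have "continuous_map (prod_topology ?X ?X) ?X (e \<circ> (\<lambda>(x, y). x \<otimes>\<^bsub>G\<^esub> y) \<circ> (\<lambda>(x,y). (r x, r y)))"
    by (rule continuous_map_compose[OF _ continuous_map_compose[OF cm ce]])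
       (simp add: continuous_map_prod_top cr)
  moreover have "(e \<circ> (\<lambda>(x, y). x \<otimes>\<^bsub>G\<^esub> y) \<circ> (\<lambda>(x,y). (r x, r y))) = (\<lambda>(x, y). x \<otimes>\<^bsub>tgrp G e\<^esub> y)"
    by (auto simp: tgrp_def)
  ultimately have m: "continuous_map (prod_topology ?X ?X) ?X (\<lambda>(x, y). x \<otimes>\<^bsub>tgrp G e\<^esub> y)" by simp
  have "continuous_map ?X ?X (e \<circ> (\<lambda>x. inv\<^bsub>G\<^esub> x) \<circ> r)"
    by (rule continuous_map_compose[OF cr continuous_map_compose[OF ci ce]])
  then have i: "continuous_map ?X ?X (\<lambda>x. inv\<^bsub>tgrp G e\<^esub> x)"
    by (rule continuous_map_eq) (simp add: ttop_topspace inv')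
  have "Hausdorff_space ?X" using hd ttop_homeo homeomorphic_Hausdorff_space by blast
  then show ?thesis unfolding topological_group_def
    using m i tgrp_group by (simp add: ttop_topspace tgrp_def)
qed

lemma tgrp_comm: "comm_group G \<Longrightarrow> comm_group (tgrp G e)"
  using comm_group.iso_imp_comm_group tgrp_iso tgrp_monoid unfolding is_iso_def by blast

lemma tgrp_exp2: "(\<forall>x\<in>carrier G. x \<otimes>\<^bsub>G\<^esub> x = \<one>\<^bsub>G\<^esub>) \<Longrightarrow>
   (\<forall>x\<in>carrier (tgrp G e). x \<otimes>\<^bsub>tgrp G e\<^esub> x = \<one>\<^bsub>tgrp G e\<^esub>)"
  by (auto simp: tgrp_def re)

lemma tgrp_not_grev: "\<not> g_reversible G X \<Longrightarrow> \<not> g_reversible (tgrp G e) (ttop (carrier G) X e)"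
proof
  let ?X = "ttop (carrier G) X e"
  assume ng: "\<not> g_reversible G X" and g': "g_reversible (tgrp G e) ?X"
  obtain f where fi: "f \<in> iso G G" and fc: "continuous_map X X f" and fo: "\<not> open_map X X f"
    using ng by (auto simp: g_reversible_def continuous_automorphism_def)
  have ce: "continuous_map X ?X e" and cr: "continuous_map ?X X r"
    using ttop_maps by (auto simp: homeomorphic_maps_def)
  have he: "homeomorphic_map X ?X e" and hr: "homeomorphic_map ?X X r"
    using ttop_maps homeomorphic_maps_map by blast+
  let ?f = "e \<circ> f \<circ> r"
  have "?f \<in> iso (tgrp G e) (tgrp G e)"
    by (rule iso_set_trans[OF tgrp_r_iso iso_set_trans[OF fi tgrp_iso]])
  moreover have "continuous_map ?X ?X ?f"
    by (rule continuous_map_compose[OF cr continuous_map_compose[OF fc ce]])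
  ultimately have "open_map ?X ?X ?f" using g' by (auto simp: g_reversible_def continuous_automorphism_def)
  then have o: "open_map X X (r \<circ> ?f \<circ> e)"
    by (rule open_map_compose[OF homeomorphic_imp_open_map[OF he] open_map_compose[OF _ homeomorphic_imp_open_map[OF hr]]])
  have fC: "x \<in> carrier G \<Longrightarrow> f x \<in> carrier G" for x
    using fi by (auto simp: iso_def hom_def)
  have "open_map X X f"
    unfolding open_map_def
  proof (intro allI impI)
    fix U assume U: "openin X U"
    then have "U \<subseteq> carrier G" using openin_subset tsp_0 by blast
    then have "f ` U = (r \<circ> ?f \<circ> e) ` U" using fC by (force simp: re image_iff)
    then show "openin X (f ` U)" using o U by (simp add: open_map_def)
  qed
  then show False using fo by simp
qed

end



definition KG :: "('a,'c) monoid_scheme \<Rightarrow> (nat \<Rightarrow> 'a) monoid" where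
  "KG H = product_group UNIV (\<lambda>_. H)"
definition PG :: "('a,'c) monoid_scheme \<Rightarrow> ((nat \<Rightarrow> 'a) \<times> (nat \<Rightarrow> 'a)) monoid" where
  "PG H = KG H \<times>\<times> KG H"
definition KT :: "'a topology \<Rightarrow> (nat \<Rightarrow> 'a) topology" where
  "KT T = product_topology (\<lambda>_. T) UNIV"
definition PX :: "'a topology \<Rightarrow> ((nat \<Rightarrow> 'a) \<times> (nat \<Rightarrow> 'a)) topology" where
  "PX T = prod_topology (discrete_topology (topspace (KT T))) (KT T)"

definition sh :: "(nat \<Rightarrow> 'a) \<times> (nat \<Rightarrow> 'a) \<Rightarrow> (nat \<Rightarrow> 'a) \<times> (nat \<Rightarrow> 'a)" where
  "sh p = (\<lambda>n. fst p (2*n+1), \<lambda>n. if even n then fst p n else snd p (n div 2))"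

lemma PiE_UNIV_iff: "x \<in> PiE UNIV S \<longleftrightarrow> (\<forall>i. x i \<in> S i)"
  by (simp add: PiE_iff)

context
  fixes H :: "('a,'c) monoid_scheme" and T :: "'a topology"
  assumes tg: "topological_group H T"
begin

private lemma grp_1: "group H" using tg by (simp add: topological_group_def)
private lemma tsp_1: "topspace T = carrier H" using tg by (simp add: topological_group_def)

lemma KT_topspace: "topspace (KT T) = carrier (KG H)"
  by (simp add: KT_def KG_def tsp_1)

lemma KG_group: "group (KG H)" using grp_1 by (simp add: KG_def)
lemma PG_group: "group (PG H)" using KG_group by (simp add: PG_def DirProd_group)

lemma KG_carrier: "x \<in> carrier (KG H) \<longleftrightarrow> (\<forall>i. x i \<in> carrier H)"
  by (simp add: KG_def PiE_UNIV_iff)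
lemma KG_mult: "x \<otimes>\<^bsub>KG H\<^esub> y = (\<lambda>i. x i \<otimes>\<^bsub>H\<^esub> y i)"
  by (simp add: KG_def restrict_UNIV)
lemma KG_one: "\<one>\<^bsub>KG H\<^esub> = (\<lambda>i. \<one>\<^bsub>H\<^esub>)"
  by (simp add: KG_def fun_eq_iff)
lemma KG_inv: "x \<in> carrier (KG H) \<Longrightarrow> inv\<^bsub>KG H\<^esub> x = (\<lambda>i. inv\<^bsub>H\<^esub> x i)"
  using grp_1 by (simp add: KG_def restrict_UNIV)
lemma PG_carrier: "carrier (PG H) = carrier (KG H) \<times> carrier (KG H)"
  by (simp add: PG_def)
lemma PG_mult: "x \<otimes>\<^bsub>PG H\<^esub> y = (fst x \<otimes>\<^bsub>KG H\<^esub> fst y, snd x \<otimes>\<^bsub>KG H\<^esub> snd y)"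
  by (simp add: PG_def mult_DirProd')
lemma PG_inv: "x \<in> carrier (PG H) \<Longrightarrow> inv\<^bsub>PG H\<^esub> x = (inv\<^bsub>KG H\<^esub> fst x, inv\<^bsub>KG H\<^esub> snd x)"
  using KG_group by (cases x) (simp add: PG_def inv_DirProd)

lemma PX_topspace: "topspace (PX T) = carrier (PG H)"
  by (simp add: PX_def PG_carrier KT_topspace)

lemma PG_topological_group: "topological_group (PG H) (PX T)"
proof -
  let ?D = "discrete_topology (carrier (KG H))"
  have PX: "PX T = prod_topology ?D (KT T)" by (simp add: PX_def KT_topspace)
  have cm: "continuous_map (prod_topology T T) T (\<lambda>(x, y). x \<otimes>\<^bsub>H\<^esub> y)"
   and ci: "continuous_map T T (\<lambda>x. inv\<^bsub>H\<^esub> x)" and hd: "Hausdorff_space T"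
    using tg by (auto simp: topological_group_def)
  have proj: "continuous_map (PX T) T (\<lambda>x. snd x k)" for k
    unfolding PX
    by (rule continuous_map_compose[OF continuous_map_snd, of _ _ "\<lambda>x. x k", simplified o_def])
       (use continuous_map_product_projection[of k UNIV "\<lambda>_. T"] in \<open>simp add: KT_def\<close>)
  have m1: "continuous_map (prod_topology (PX T) (PX T)) ?D (\<lambda>p. fst (fst p \<otimes>\<^bsub>PG H\<^esub> snd p))"
  proof -
    have a: "continuous_map (prod_topology (PX T) (PX T)) (prod_topology ?D ?D) (\<lambda>(x,y). (fst x, fst y))"
      by (simp add: continuous_map_prod_top PX continuous_map_fst)
    have b: "continuous_map (prod_topology ?D ?D) ?D (\<lambda>(a,b). a \<otimes>\<^bsub>KG H\<^esub> b)"
      unfolding prod_topology_discrete_topology[symmetric]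
      using KG_group by (auto simp: group.is_monoid monoid.m_closed)
    show ?thesis using continuous_map_compose[OF a b]
      by (simp add: PG_mult o_def case_prod_unfold)
  qed
  have m2: "continuous_map (prod_topology (PX T) (PX T)) (KT T) (\<lambda>p. snd (fst p \<otimes>\<^bsub>PG H\<^esub> snd p))"
    unfolding KT_def continuous_map_componentwise_UNIV
  proof
    fix k
    have a: "continuous_map (prod_topology (PX T) (PX T)) (prod_topology T T) (\<lambda>(x,y). (snd x k, snd y k))"
      by (simp add: continuous_map_prod_top proj)
    show "continuous_map (prod_topology (PX T) (PX T)) T (\<lambda>p. snd (fst p \<otimes>\<^bsub>PG H\<^esub> snd p) k)"
      using continuous_map_compose[OF a cm]
      by (simp add: PG_mult KG_mult o_def case_prod_unfold)
  qed
  have m: "continuous_map (prod_topology (PX T) (PX T)) (PX T) (\<lambda>(x, y). x \<otimes>\<^bsub>PG H\<^esub> y)"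
  proof -
    have "continuous_map (prod_topology (PX T) (PX T)) (prod_topology ?D (KT T)) (\<lambda>p. fst p \<otimes>\<^bsub>PG H\<^esub> snd p)"
      unfolding continuous_map_pairwise using m1 m2 by (simp add: o_def PX)
    then show ?thesis by (simp add: PX case_prod_unfold)
  qed
  have i1: "continuous_map (PX T) ?D (\<lambda>x. \<lambda>i. inv\<^bsub>H\<^esub> (fst x i))"
  proof -
    have "continuous_map ?D ?D (\<lambda>d. \<lambda>i. inv\<^bsub>H\<^esub> (d i))"
      using grp_1 by (auto simp: KG_carrier group.inv_closed)
    from continuous_map_compose[OF _ this, of "PX T" fst] show ?thesis
      by (simp add: PX continuous_map_fst o_def)
  qed
  have i2: "continuous_map (PX T) (KT T) (\<lambda>x. \<lambda>i. inv\<^bsub>H\<^esub> (snd x i))"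
    unfolding KT_def continuous_map_componentwise_UNIV
    using continuous_map_compose[OF proj ci] by (simp add: o_def)
  have "continuous_map (PX T) (PX T) (\<lambda>x. (\<lambda>i. inv\<^bsub>H\<^esub> (fst x i), \<lambda>i. inv\<^bsub>H\<^esub> (snd x i)))"
    unfolding PX continuous_map_pairwise using i1 i2 by (simp add: PX o_def)
  then have i: "continuous_map (PX T) (PX T) (\<lambda>x. inv\<^bsub>PG H\<^esub> x)"
    by (rule continuous_map_eq) (auto simp: PX_topspace PG_inv KG_inv PG_carrier)
  have "Hausdorff_space (PX T)"
    using hd by (simp add: PX Hausdorff_space_prod_topology KT_def Hausdorff_space_product_topology)
  then show ?thesis unfolding topological_group_def
    using m i PG_group PX_topspace by simp
qed

end



context
  fixes H :: "('a,'c) monoid_scheme" and T :: "'a topology"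
  assumes tg: "topological_group H T"
begin

private lemma grp_2: "group H" using tg by (simp add: topological_group_def)
private lemma tsp_2: "topspace T = carrier H" using tg by (simp add: topological_group_def)
private lemma PX_2: "PX T = prod_topology (discrete_topology (carrier (KG H))) (KT T)"
  by (simp add: PX_def KT_topspace[OF tg])

lemma PG_comm: "comm_group H \<Longrightarrow> comm_group (PG H)"
proof -
  assume "comm_group H"
  then have cm: "comm_monoid H" by (simp add: comm_group_def)
  show ?thesis
  apply (rule group.group_comm_groupI[OF PG_group[OF tg]])
    apply (auto simp: PG_carrier[OF tg] PG_mult[OF tg] KG_mult[OF tg] KG_carrier[OF tg] fun_eq_iff comm_monoid.m_comm[OF cm])
  done
qed

lemma PG_exp2: "(\<forall>x\<in>carrier H. x \<otimes>\<^bsub>H\<^esub> x = \<one>\<^bsub>H\<^esub>) \<Longrightarrow> (\<forall>x\<in>carrier (PG H). x \<otimes>\<^bsub>PG H\<^esub> x = \<one>\<^bsub>PG H\<^esub>)"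
  by (auto simp: PG_carrier[OF tg] PG_mult[OF tg] KG_mult[OF tg] KG_carrier[OF tg] PG_def KG_one[OF tg, symmetric])

lemma PX_metrizable: "metrizable_space T \<Longrightarrow> metrizable_space (PX T)"
  unfolding PX_2 metrizable_space_prod_topology KT_def metrizable_space_product_topology
  by (auto intro: countable_subset[of _ UNIV])

lemma PX_lc: "compact_space T \<Longrightarrow> locally_compact_space (PX T)"
  unfolding PX_2 locally_compact_space_prod_topology
  by (simp add: locally_compact_space_discrete_topology compact_imp_locally_compact_space KT_def compact_space_product_topology)

lemma PX_lconn: "locally_connected_space T \<Longrightarrow> connected_space T \<Longrightarrow> locally_connected_space (PX T)"
  unfolding PX_2 locally_connected_space_prod_topology KT_def locally_connected_space_product_topology
  by (simp add: locally_connected_space_discrete_topology)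

end



context
  fixes H :: "('a,'c) monoid_scheme" and T :: "'a topology"
  assumes tg: "topological_group H T"
begin

private lemma grp_3: "group H" using tg by (simp add: topological_group_def)
private lemma tsp_3: "topspace T = carrier H" using tg by (simp add: topological_group_def)
private lemma PX_3: "PX T = prod_topology (discrete_topology (carrier (KG H))) (KT T)"
  by (simp add: PX_def KT_topspace[OF tg])

lemma PX_dim: "T = discrete_topology (carrier H) \<Longrightarrow> PX T dim_le 0"
  unfolding dimension_le_0_neighbourhood_base_of_clopen neighbourhood_base_of
proof (intro allI impI)
  assume Td: "T = discrete_topology (carrier H)"
  fix W x assume Wx: "openin (PX T) W \<and> x \<in> W"
  obtain d k where x: "x = (d, k)" by (cases x)
  from Wx obtain U V where UV: "openin (discrete_topology (carrier (KG H))) U" "openin (KT T) V"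
      "d \<in> U" "k \<in> V" "U \<times> V \<subseteq> W"
    unfolding PX_3 openin_prod_topology_alt x by blast
  from UV(2,4) obtain Ub where Ub: "finite {i \<in> UNIV. Ub i \<noteq> topspace T}"
       "\<forall>i\<in>UNIV. openin T (Ub i)" "k \<in> PiE UNIV Ub" "PiE UNIV Ub \<subseteq> V"
    unfolding KT_def openin_product_topology_alt by blast
  define F where "F = {i \<in> UNIV. Ub i \<noteq> topspace T}"
  define V' where "V' = PiE UNIV (\<lambda>i. if i \<in> F then {k i} else carrier H)"
  have dC: "d \<in> carrier (KG H)" using UV(1,3) openin_subset by fastforce
  have kC: "k \<in> carrier (KG H)" using UV(2,4) openin_subset KT_topspace[OF tg] by fastforce
  have kV': "k \<in> V'" using kC by (auto simp: V'_def PiE_UNIV_iff KG_carrier[OF tg])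
  have V'V: "V' \<subseteq> V"
  proof
    fix y assume "y \<in> V'"
    then have "y \<in> PiE UNIV Ub" using Ub(3) tsp_3
      by (auto simp: V'_def PiE_UNIV_iff F_def split: if_splits)
    then show "y \<in> V" using Ub(4) by blast
  qed
  have V'o: "openin (KT T) V'"
    unfolding KT_def V'_def openin_PiE_gen
    by (rule disjI2, rule conjI, rule finite_subset[OF _ Ub(1)[folded F_def]])
       (use kC in \<open>auto simp: F_def Td KG_carrier[OF tg]\<close>)
  have V'c: "closedin (KT T) V'"
    unfolding KT_def V'_def closedin_product_topology
    using kC by (auto simp: Td KG_carrier[OF tg])
  show "\<exists>U V. openin (PX T) U \<and> (closedin (PX T) V \<and> openin (PX T) V) \<and> x \<in> U \<and> U \<subseteq> V \<and> V \<subseteq> W"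
  proof (intro exI conjI)
    show "openin (PX T) ({d} \<times> V')" "openin (PX T) ({d} \<times> V')"
      unfolding PX_3 openin_prod_Times_iff using V'o dC by auto
    show "closedin (PX T) ({d} \<times> V')"
      unfolding PX_3 closedin_prod_Times_iff using V'c dC by auto
    show "x \<in> {d} \<times> V'" using x kV' by auto
    show "{d} \<times> V' \<subseteq> W" using UV(3,5) V'V by auto
  qed auto
qed

lemma sh_iso: "sh \<in> iso (PG H) (PG H)"
  unfolding iso_def hom_def
proof (intro CollectI conjI ballI)
  let ?C = "carrier (PG H)"
  define g :: "(nat \<Rightarrow> 'a) \<times> (nat \<Rightarrow> 'a) \<Rightarrow> (nat \<Rightarrow> 'a) \<times> (nat \<Rightarrow> 'a)" where
    "g p = (\<lambda>n. if even n then snd p n else fst p (n div 2), \<lambda>m. snd p (2*m+1))" for p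
  have odd: "odd n \<Longrightarrow> 2 * (n div 2) + 1 = n" for n :: nat by presburger
  show shC: "sh \<in> ?C \<rightarrow> ?C"
    by (auto simp: sh_def PG_carrier[OF tg] KG_carrier[OF tg])
  show "sh (x \<otimes>\<^bsub>PG H\<^esub> y) = sh x \<otimes>\<^bsub>PG H\<^esub> sh y" for x y
    by (simp add: sh_def PG_mult[OF tg] KG_mult[OF tg] fun_eq_iff)
  show "bij_betw sh ?C ?C"
  proof (rule bij_betw_byWitness[where f'=g])
    show "\<forall>a\<in>?C. g (sh a) = a"
      by (auto simp: g_def sh_def fun_eq_iff odd)
    show "\<forall>a\<in>?C. sh (g a) = a"
      by (auto simp: g_def sh_def fun_eq_iff odd)
    show "sh ` ?C \<subseteq> ?C" using shC by auto
    show "g ` ?C \<subseteq> ?C"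
      by (auto simp: g_def PG_carrier[OF tg] KG_carrier[OF tg])
  qed
qed

lemma sh_cont: "continuous_map (PX T) (PX T) sh"
  unfolding PX_3 continuous_map_pairwise
proof
  show "continuous_map (prod_topology (discrete_topology (carrier (KG H))) (KT T))
     (discrete_topology (carrier (KG H))) (fst \<circ> sh)"
  proof -
    have "continuous_map (discrete_topology (carrier (KG H))) (discrete_topology (carrier (KG H))) (\<lambda>d n. d (2*n+1))"
      by (auto simp: KG_carrier[OF tg])
    from continuous_map_compose[OF continuous_map_fst this] show ?thesis
      by (simp add: o_def sh_def)
  qed
  show "continuous_map (prod_topology (discrete_topology (carrier (KG H))) (KT T)) (KT T) (snd \<circ> sh)"
    unfolding KT_def continuous_map_componentwise_UNIV
  proof
    fix n :: nat
    show "continuous_map (prod_topology (discrete_topology (carrier (KG H))) (product_topology (\<lambda>_. T) UNIV)) T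
          (\<lambda>x. (snd \<circ> sh) x n)"
    proof (cases "even n")
      case True
      have "continuous_map (discrete_topology (carrier (KG H))) T (\<lambda>d. d n)"
        by (auto simp: KG_carrier[OF tg] tsp_3)
      from continuous_map_compose[OF continuous_map_fst this] show ?thesis
        using True by (simp add: o_def sh_def)
    next
      case False
      from continuous_map_compose[OF continuous_map_snd continuous_map_product_projection[of "n div 2" UNIV "\<lambda>_. T"]]
      show ?thesis using False by (simp add: o_def sh_def)
    qed
  qed
qed



end


context
  fixes H :: "('a,'c) monoid_scheme" and T :: "'a topology"
  assumes tg: "topological_group H T"
begin
private lemma grp_4: "group H" using tg by (simp add: topological_group_def)
private lemma tsp_4: "topspace T = carrier H" using tg by (simp add: topological_group_def)
private lemma PX_4: "PX T = prod_topology (discrete_topology (carrier (KG H))) (KT T)"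
  by (simp add: PX_def KT_topspace[OF tg])

lemma PG_not_grev':
  assumes a: "a \<in> carrier H" "a \<noteq> \<one>\<^bsub>H\<^esub>"
  shows "\<not> g_reversible (PG H) (PX T)"
proof
  assume "g_reversible (PG H) (PX T)"
  then have o: "open_map (PX T) (PX T) sh"
    using sh_iso[OF tg] sh_cont[OF tg] by (simp add: g_reversible_def continuous_automorphism_def)
  define a0 where "a0 = (\<lambda>_::nat. a)"
  have a0C: "a0 \<in> carrier (KG H)" using a by (simp add: a0_def KG_carrier[OF tg])
  have "openin (PX T) ({a0} \<times> carrier (KG H))"
    unfolding PX_4 openin_prod_Times_iff using a0C KT_topspace[OF tg] openin_topspace[of "KT T"] by auto
  then have op: "openin (PX T) (sh ` ({a0} \<times> carrier (KG H)))" using o unfolding open_map_def by blast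
  have "sh (a0, a0) = (a0, a0)" by (simp add: sh_def a0_def fun_eq_iff)
  then have mem: "(a0, a0) \<in> sh ` ({a0} \<times> carrier (KG H))"
    by (rule image_eqI[OF sym]) (use a0C in auto)
  from op[unfolded PX_4 openin_prod_topology_alt, rule_format, OF mem] obtain U V where UV: "openin (discrete_topology (carrier (KG H))) U" "openin (KT T) V"
      "a0 \<in> U" "a0 \<in> V" "U \<times> V \<subseteq> sh ` ({a0} \<times> carrier (KG H))"
    by blast
  from bspec[OF UV(2)[unfolded KT_def openin_product_topology_alt] UV(4)] obtain Ub where Ub: "finite {i \<in> UNIV. Ub i \<noteq> topspace T}"
       "\<forall>i\<in>UNIV. openin T (Ub i)" "a0 \<in> PiE UNIV Ub" "PiE UNIV Ub \<subseteq> V"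
    by blast
  obtain N where N: "{i \<in> UNIV. Ub i \<noteq> topspace T} \<subseteq> {..<N}" using finite_nat_bounded[OF Ub(1)] by blast
  define n where "n = 2 * N"
  have ev: "even n" by (simp add: n_def)
  have Ubn: "Ub n = carrier H" using N tsp_4 by (auto simp: n_def)
  define w where "w = a0(n := \<one>\<^bsub>H\<^esub>)"
  have "w \<in> PiE UNIV Ub"
    unfolding PiE_UNIV_iff
  proof
    fix i show "w i \<in> Ub i"
    proof (cases "i = n")
      case True then show ?thesis using Ubn grp_4 by (simp add: w_def group.is_monoid monoid.one_closed)
    next
      case False then show ?thesis using Ub(3) by (simp add: w_def PiE_UNIV_iff)
    qed
  qed
  then have "(a0, w) \<in> sh ` ({a0} \<times> carrier (KG H))" using Ub(4) UV(3,5) by blast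
  then obtain p where p: "p \<in> {a0} \<times> carrier (KG H)" "(a0, w) = sh p" by (rule imageE)
  have p1: "fst p = a0" using p(1) by auto
  have "w = snd (sh p)" using p(2) by (metis snd_conv)
  then have "w n = fst p n" using ev by (simp add: sh_def)
  then have "w n = a0 n" using p1 by simp
  then show False using a by (simp add: w_def a0_def)
qed
end



definition Z2 :: "real monoid" where
  "Z2 = \<lparr>carrier = {0,1}, mult = (\<lambda>x y. if x = y then 0 else 1), one = 0\<rparr>"

lemma Z2_group: "group Z2"
  by (rule groupI) (auto simp: Z2_def)

lemma Z2_inv: "x \<in> carrier Z2 \<Longrightarrow> inv\<^bsub>Z2\<^esub> x = x"
  by (rule group.inv_equality[OF Z2_group]) (auto simp: Z2_def)

lemma Z2_tg: "topological_group Z2 (discrete_topology {0,1})"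
  unfolding topological_group_def
proof (intro conjI)
  show "continuous_map (prod_topology (discrete_topology {0,1}) (discrete_topology {0,1})) (discrete_topology {0,1})
     (\<lambda>(x, y). x \<otimes>\<^bsub>Z2\<^esub> y)"
    unfolding prod_topology_discrete_topology[symmetric] by (auto simp: Z2_def)
  show "continuous_map (discrete_topology {0,1}) (discrete_topology {0,1}) (m_inv Z2)"
    using Z2_inv by (auto simp: Z2_def)
qed (use Z2_group in \<open>auto simp: Z2_def\<close>)

definition S1 :: "complex monoid" where
  "S1 = \<lparr>carrier = sphere 0 1, mult = (*), one = 1\<rparr>"

lemma S1_group: "group S1"
proof (rule groupI)
  fix x assume x: "x \<in> carrier S1"
  then have "x \<noteq> 0" by (auto simp: S1_def)
  then show "\<exists>y\<in>carrier S1. y \<otimes>\<^bsub>S1\<^esub> x = \<one>\<^bsub>S1\<^esub>"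
    using x by (intro bexI[of _ "inverse x"]) (auto simp: S1_def norm_inverse)
qed (auto simp: S1_def norm_mult mult.assoc)

lemma S1_inv: "x \<in> carrier S1 \<Longrightarrow> inv\<^bsub>S1\<^esub> x = inverse x"
  by (rule group.inv_equality[OF S1_group]) (auto simp: S1_def norm_inverse intro!: left_inverse)

lemma S1_tg: "topological_group S1 (top_of_set (sphere 0 1))"
  unfolding topological_group_def
proof (intro conjI)
  show "continuous_map (prod_topology (top_of_set (sphere 0 1)) (top_of_set (sphere 0 1))) (top_of_set (sphere 0 1))
     (\<lambda>(x, y). x \<otimes>\<^bsub>S1\<^esub> y)"
    unfolding prod_topology_subtopology_eu continuous_map_subtopology_eu
    by (auto simp: S1_def case_prod_unfold norm_mult intro!: continuous_intros)
  have "continuous_map (top_of_set (sphere 0 1)) (top_of_set (sphere (0::complex) 1)) inverse"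
    unfolding continuous_map_subtopology_eu
    by (auto simp: norm_inverse intro!: continuous_intros)
  then show "continuous_map (top_of_set (sphere 0 1)) (top_of_set (sphere 0 1)) (m_inv S1)"
  proof (rule continuous_map_eq)
    fix x assume "x \<in> topspace (top_of_set (sphere (0::complex) 1))"
    then have "x \<in> carrier S1" by (simp add: S1_def)
    then show "inverse x = inv\<^bsub>S1\<^esub> x" by (simp add: S1_inv)
  qed
  show "Hausdorff_space (top_of_set (sphere (0::complex) 1))"
    by (simp add: Hausdorff_space_subtopology)
qed (use S1_group in \<open>auto simp: S1_def\<close>)

lemma S1_comm: "comm_group S1"
  by (rule group.group_comm_groupI[OF S1_group]) (auto simp: S1_def mult.commute)

lemma S1_lconn: "locally_connected_space (top_of_set (sphere (0::complex) 1))"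
  unfolding locally_connected_space_def neighbourhood_base_of
proof (intro allI impI)
  fix W x assume "openin (top_of_set (sphere (0::complex) 1)) W \<and> x \<in> W"
  then obtain U V where UV: "openin (top_of_set (sphere (0::complex) 1)) U" "connected V" "x \<in> U" "U \<subseteq> V" "V \<subseteq> W"
    using locallyE[OF locally_connected_sphere] by metis
  have "W \<subseteq> sphere 0 1" using \<open>openin _ W \<and> x \<in> W\<close> openin_subset by force
  then show "\<exists>U V. openin (top_of_set (sphere 0 1)) U \<and> connectedin (top_of_set (sphere 0 1)) V \<and> x \<in> U \<and> U \<subseteq> V \<and> V \<subseteq> W"
    using UV by (intro exI[of _ U] exI[of _ V]) (auto simp: connectedin_subtopology)
qed

lemma S1_conn: "connected_space (top_of_set (sphere (0::complex) 1))"
  by (rule connected_space_subtopology) (simp add: connected_sphere)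

definition e1 :: "(nat \<Rightarrow> real) \<times> (nat \<Rightarrow> real) \<Rightarrow> (nat \<Rightarrow> real)" where
  "e1 p = (\<lambda>n. if even n then fst p (n div 2) else snd p (n div 2))"

lemma e1_inj: "inj e1"
proof (rule injI)
  fix p q assume h: "e1 p = e1 q"
  have "fst p m = fst q m \<and> snd p m = snd q m" for m
    using fun_cong[OF h, of "2*m"] fun_cong[OF h, of "2*m+1"] by (simp add: e1_def)
  then show "p = q" by (simp add: prod_eq_iff fun_eq_iff)
qed

definition cr :: "(nat \<Rightarrow> complex) \<Rightarrow> (nat \<Rightarrow> real)" where
  "cr z = (\<lambda>n. if even n then Re (z (n div 2)) else Im (z (n div 2)))"

lemma cr_inj: "inj cr"
proof (rule injI)
  fix p q assume h: "cr p = cr q"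
  have "Re (p m) = Re (q m) \<and> Im (p m) = Im (q m)" for m
    using fun_cong[OF h, of "2*m"] fun_cong[OF h, of "2*m+1"] by (simp add: cr_def)
  then show "p = q" by (simp add: fun_eq_iff complex_eq_iff)
qed

definition e2 :: "(nat \<Rightarrow> complex) \<times> (nat \<Rightarrow> complex) \<Rightarrow> (nat \<Rightarrow> real)" where
  "e2 p = e1 (cr (fst p), cr (snd p))"

lemma e2_inj: "inj e2"
proof (rule injI)
  fix p q assume "e2 p = e2 q"
  then have "(cr (fst p), cr (snd p)) = (cr (fst q), cr (snd q))"
    using e1_inj by (simp add: e2_def inj_eq)
  then show "p = q" using cr_inj by (simp add: inj_eq prod_eq_iff)
qed




lemma Z2_comm: "comm_group Z2"
  by (rule group.group_comm_groupI[OF Z2_group]) (auto simp: Z2_def)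

theorem corollary4p5:
  shows "(\<exists>(G :: (nat \<Rightarrow> real) monoid) (X :: (nat \<Rightarrow> real) topology).
            topological_group G X \<and> comm_group G \<and>
            X dim_le 0 \<and> locally_compact_space X \<and> metrizable_space X \<and>
            (\<forall>x \<in> carrier G. x \<otimes>\<^bsub>G\<^esub> x = \<one>\<^bsub>G\<^esub>) \<and>
            \<not> g_reversible G X)
       \<and> (\<exists>(G :: (nat \<Rightarrow> real) monoid) (X :: (nat \<Rightarrow> real) topology).
            topological_group G X \<and> comm_group G \<and>
            locally_connected_space X \<and> locally_compact_space X \<and> metrizable_space X \<and>
            \<not> g_reversible G X)"
proof (rule conjI)
  have tg: "topological_group (PG Z2) (PX (discrete_topology {0::real,1}))"
    by (rule PG_topological_group[OF Z2_tg])
  have inj: "inj_on e1 (carrier (PG Z2))" by (rule inj_on_subset[OF e1_inj]) simp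
  have homeo: "PX (discrete_topology {0::real,1}) homeomorphic_space ttop (carrier (PG Z2)) (PX (discrete_topology {0::real,1})) e1"
    by (rule ttop_homeo[OF tg inj])
  have dim: "PX (discrete_topology {0::real,1}) dim_le 0"
    by (rule PX_dim[OF Z2_tg]) (simp add: Z2_def)
  have lc: "locally_compact_space (PX (discrete_topology {0::real,1}))"
    by (rule PX_lc[OF Z2_tg]) (simp add: compact_space_discrete_topology)
  have met: "metrizable_space (PX (discrete_topology {0::real,1}))"
    by (rule PX_metrizable[OF Z2_tg]) simp
  have ex: "\<forall>x\<in>carrier Z2. x \<otimes>\<^bsub>Z2\<^esub> x = \<one>\<^bsub>Z2\<^esub>" by (simp add: Z2_def)
  have ng: "\<not> g_reversible (PG Z2) (PX (discrete_topology {0::real,1}))"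
    by (rule PG_not_grev'[OF Z2_tg, of 1]) (simp_all add: Z2_def)
  show "\<exists>(G :: (nat \<Rightarrow> real) monoid) (X :: (nat \<Rightarrow> real) topology).
            topological_group G X \<and> comm_group G \<and>
            X dim_le 0 \<and> locally_compact_space X \<and> metrizable_space X \<and>
            (\<forall>x \<in> carrier G. x \<otimes>\<^bsub>G\<^esub> x = \<one>\<^bsub>G\<^esub>) \<and>
            \<not> g_reversible G X"
    apply (rule exI[of _ "tgrp (PG Z2) e1"])
    apply (rule exI[of _ "ttop (carrier (PG Z2)) (PX (discrete_topology {0::real,1})) e1"])
    apply (intro conjI)
    using tgrp_topological_group[OF tg inj]
      tgrp_comm[OF tg inj PG_comm[OF Z2_tg Z2_comm]]
      homeomorphic_space_dimension_le[OF homeo] dim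
      homeomorphic_locally_compact_space[OF homeo] lc
      homeomorphic_metrizable_space[OF homeo] met
      tgrp_exp2[OF tg inj PG_exp2[OF Z2_tg ex]]
      tgrp_not_grev[OF tg inj ng]
    by auto
next
  let ?T = "top_of_set (sphere (0::complex) 1)"
  have tg: "topological_group (PG S1) (PX ?T)"
    by (rule PG_topological_group[OF S1_tg])
  have inj: "inj_on e2 (carrier (PG S1))" by (rule inj_on_subset[OF e2_inj]) simp
  have homeo: "PX ?T homeomorphic_space ttop (carrier (PG S1)) (PX ?T) e2"
    by (rule ttop_homeo[OF tg inj])
  have lconn: "locally_connected_space (PX ?T)"
    by (rule PX_lconn[OF S1_tg S1_lconn S1_conn])
  have lc: "locally_compact_space (PX ?T)"
    by (rule PX_lc[OF S1_tg]) (simp add: compact_space_subtopology)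
  have met: "metrizable_space (PX ?T)"
    by (rule PX_metrizable[OF S1_tg]) (simp add: metrizable_space_subtopology metrizable_space_euclidean)
  have ng: "\<not> g_reversible (PG S1) (PX ?T)"
    by (rule PG_not_grev'[OF S1_tg, of "-1"]) (simp_all add: S1_def)
  show "\<exists>(G :: (nat \<Rightarrow> real) monoid) (X :: (nat \<Rightarrow> real) topology).
            topological_group G X \<and> comm_group G \<and>
            locally_connected_space X \<and> locally_compact_space X \<and> metrizable_space X \<and>
            \<not> g_reversible G X"
    apply (rule exI[of _ "tgrp (PG S1) e2"])
    apply (rule exI[of _ "ttop (carrier (PG S1)) (PX ?T) e2"])
    apply (intro conjI)
    using tgrp_topological_group[OF tg inj]
      tgrp_comm[OF tg inj PG_comm[OF S1_tg S1_comm]]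
      homeomorphic_locally_connected_space[OF homeo] lconn
      homeomorphic_locally_compact_space[OF homeo] lc
      homeomorphic_metrizable_space[OF homeo] met
      tgrp_not_grev[OF tg inj ng]
    by auto
qed


end
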